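(* Let $\mathbf{x}$ be a probability vector for $S$ and define $W_{\rm det}=\sup\{W\in\mathbb{R}:\ \mathbf{x}\otimes(1,0)\succ_g\mathbf{g}\otimes(0,1)\text{ with respect to }H_{SW}(W)\}$. Then the supremum is attained and $$W_{\rm det}=-kT\log\sum_{i:\,x_i\ne0}g_i.$$
   Context: $S$ has Hamiltonian $H_S=\sum_{i=1}^nE_i|i\rangle\langle i|$, $\beta=1/(kT)>0$, $Z_S=\sum_ie^{-\beta E_i}$, Gibbs vector $g_i=e^{-\beta E_i}/Z_S$. The battery is a two-level system with Hamiltonian $W|1\rangle\langle1|$ and $H_{SW}(W)=H_S\otimes\mathbb{I}+\mathbb{I}\otimes W|1\rangle\langle1|$; $\mathbf{x}\otimes(1,0)$ denotes the product distribution with battery in $|0\rangle$, and $\mathbf{g}\otimes(0,1)$ with battery in $|1\rangle$. Thermo-majorisation for a Hamiltonian $H$ with eigenvalues $\epsilon_1,\dots,\epsilon_m$ and $Z=\sum_je^{-\beta\epsilon_j}$: for a probability vector $\mathbf{u}$ let $\pi$ order $u_{\pi(1)}e^{\beta\epsilon_{\pi(1)}}\ge\dots\ge u_{\pi(m)}e^{\beta\epsilon_{\pi(m)}}$; the curve $T(\mathbf{u})$ is the piecewise linear function on $[0,Z]$ joining the origin and $\big(\sum_{j\le k}e^{-\beta\epsilon_{\pi(j)}},\sum_{j\le k}u_{\pi(j)}\big)$, $k=1,\dots,m$; $\mathbf{u}\succ_g\mathbf{v}$ iff $T(\mathbf{u})\ge T(\mathbf{v})$ pointwise. *)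

theory Defs
  imports "HOL-Analysis.Analysis"
begin

definition beta_order ::
  "real \<Rightarrow> ('a \<Rightarrow> real) \<Rightarrow> 'a set \<Rightarrow> ('a \<Rightarrow> real) \<Rightarrow> (nat \<Rightarrow> 'a) \<Rightarrow> bool" where
  "beta_order beta eps A u \<sigma> \<longleftrightarrow>
     bij_betw \<sigma> {0..<card A} A \<and>
     (\<forall>j k. j \<le> k \<and> k < card A \<longrightarrow>
        u (\<sigma> k) * exp (beta * eps (\<sigma> k)) \<le> u (\<sigma> j) * exp (beta * eps (\<sigma> j)))"

definition partfun :: "real \<Rightarrow> ('a \<Rightarrow> real) \<Rightarrow> 'a set \<Rightarrow> real" where
  "partfun beta eps A = (\<Sum>a\<in>A. exp (- beta * eps a))"

definition knot_x :: "real \<Rightarrow> ('a \<Rightarrow> real) \<Rightarrow> (nat \<Rightarrow> 'a) \<Rightarrow> nat \<Rightarrow> real" where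
  "knot_x beta eps \<sigma> k = (\<Sum>j<k. exp (- beta * eps (\<sigma> j)))"

definition knot_y :: "('a \<Rightarrow> real) \<Rightarrow> (nat \<Rightarrow> 'a) \<Rightarrow> nat \<Rightarrow> real" where
  "knot_y u \<sigma> k = (\<Sum>j<k. u (\<sigma> j))"

definition curve_of ::
  "real \<Rightarrow> ('a \<Rightarrow> real) \<Rightarrow> 'a set \<Rightarrow> ('a \<Rightarrow> real) \<Rightarrow> (nat \<Rightarrow> 'a) \<Rightarrow> real \<Rightarrow> real" where
  "curve_of beta eps A u \<sigma> t =
     (let k = (LEAST k. t \<le> knot_x beta eps \<sigma> (Suc k)) in
        knot_y u \<sigma> k + (t - knot_x beta eps \<sigma> k)
          / (knot_x beta eps \<sigma> (Suc k) - knot_x beta eps \<sigma> k)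
          * (knot_y u \<sigma> (Suc k) - knot_y u \<sigma> k))"

text \<open>The thermo-majorisation curve T(u) (using some beta-ordering; the curve does
not depend on how ties are broken).\<close>
definition thermo_curve ::
  "real \<Rightarrow> ('a \<Rightarrow> real) \<Rightarrow> 'a set \<Rightarrow> ('a \<Rightarrow> real) \<Rightarrow> real \<Rightarrow> real" where
  "thermo_curve beta eps A u =
     curve_of beta eps A u (SOME \<sigma>. beta_order beta eps A u \<sigma>)"

definition thermo_maj ::
  "real \<Rightarrow> ('a \<Rightarrow> real) \<Rightarrow> 'a set \<Rightarrow> ('a \<Rightarrow> real) \<Rightarrow> ('a \<Rightarrow> real) \<Rightarrow> bool" where
  "thermo_maj beta eps A u v \<longleftrightarrow>
     (\<forall>t\<in>{0..partfun beta eps A}. thermo_curve beta eps A v t \<le> thermo_curve beta eps A u t)"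

definition gibbs :: "real \<Rightarrow> nat \<Rightarrow> (nat \<Rightarrow> real) \<Rightarrow> nat \<Rightarrow> real" where
  "gibbs beta n E i = exp (- beta * E i) / (\<Sum>j<n. exp (- beta * E j))"

text \<open>System plus two-level battery: levels (i,b), i<n, b\<in>{0,1};
H_SW(W) has energy E i + b W.\<close>
definition SW_levels :: "nat \<Rightarrow> (nat \<times> nat) set" where
  "SW_levels n = {0..<n} \<times> {0, 1}"

definition SW_energy :: "(nat \<Rightarrow> real) \<Rightarrow> real \<Rightarrow> nat \<times> nat \<Rightarrow> real" where
  "SW_energy E W ib = E (fst ib) + (if snd ib = 1 then W else 0)"

text \<open>Product distribution p \<otimes> (1,0) (battery in |0>) and p \<otimes> (0,1) (battery in |1>).\<close>
definition batt0 :: "(nat \<Rightarrow> real) \<Rightarrow> nat \<times> nat \<Rightarrow> real" where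
  "batt0 p ib = (if snd ib = 0 then p (fst ib) else 0)"

definition batt1 :: "(nat \<Rightarrow> real) \<Rightarrow> nat \<times> nat \<Rightarrow> real" where
  "batt1 p ib = (if snd ib = 1 then p (fst ib) else 0)"

end

theory Submission
  imports Defs
begin


lemma kx_Suc: "knot_x b e s (Suc k) = knot_x b e s k + exp (- b * e (s k))"
  by (simp add: knot_x_def)
lemma ky_Suc: "knot_y u s (Suc k) = knot_y u s k + u (s k)"
  by (simp add: knot_y_def)
lemma kx_0[simp]: "knot_x b e s 0 = 0" by (simp add: knot_x_def)
lemma ky_0[simp]: "knot_y u s 0 = 0" by (simp add: knot_y_def)

lemma kx_mono: "k \<le> l \<Longrightarrow> knot_x b e s k \<le> knot_x b e s l"
  unfolding knot_x_def by (rule sum_mono2) auto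

lemma kx_strict: "k < l \<Longrightarrow> knot_x b e s k < knot_x b e s l"
proof -
  assume "k < l"
  hence "knot_x b e s (Suc k) \<le> knot_x b e s l" by (intro kx_mono) auto
  moreover have "exp (- b * e (s k)) > 0" by simp
  ultimately show ?thesis using kx_Suc[of b e s k] by linarith
qed

lemma ky_mono: "k \<le> l \<Longrightarrow> (\<forall>j<l. 0 \<le> u (s j)) \<Longrightarrow> knot_y u s k \<le> knot_y u s l"
  unfolding knot_y_def by (rule sum_mono2) auto

lemma ky_split: "k \<le> l \<Longrightarrow> knot_y u s l = knot_y u s k + (\<Sum>j\<in>{k..<l}. u (s j))"
  unfolding knot_y_def lessThan_atLeast0 by (simp add: sum.atLeastLessThan_concat)
lemma kx_split: "k \<le> l \<Longrightarrow> knot_x b e s l = knot_x b e s k + (\<Sum>j\<in>{k..<l}. exp (- b * e (s j)))"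
  unfolding knot_x_def lessThan_atLeast0 by (simp add: sum.atLeastLessThan_concat)

lemma term_ineq:
  fixes a b c p q :: real
  assumes "a * exp (b * p) \<le> c * exp (b * q)"
  shows "a * exp (- b * q) \<le> c * exp (- b * p)"
proof -
  have e1: "a * exp (- b*q) = a*exp(b*p)*(exp(-b*p)*exp(-b*q))" by (simp add: exp_minus field_simps)
  have e2: "c * exp (- b*p) = c*exp(b*q)*(exp(-b*p)*exp(-b*q))" by (simp add: exp_minus field_simps)
  show ?thesis unfolding e1 e2 by (rule mult_right_mono[OF assms]) simp
qed

lemma chord:
  assumes bo: "beta_order b e A u s" and kl: "k \<le> l" and lm: "l \<le> card A"
  shows "knot_y u s l * knot_x b e s k \<le> knot_y u s k * knot_x b e s l"
proof -
  define Dy where "Dy = (\<Sum>i\<in>{k..<l}. u (s i))"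
  define Dx where "Dx = (\<Sum>i\<in>{k..<l}. exp (- b * e (s i)))"
  have ord: "\<And>i j. j \<le> i \<Longrightarrow> i < card A \<Longrightarrow> u (s i) * exp (b * e (s i)) \<le> u (s j) * exp (b * e (s j))"
    using bo unfolding beta_order_def by blast
  have "Dy * knot_x b e s k = (\<Sum>i\<in>{k..<l}. \<Sum>j<k. u (s i) * exp (- b * e (s j)))"
    unfolding Dy_def knot_x_def by (simp add: sum_distrib_left sum_distrib_right) (rule sum.swap)
  also have "\<dots> \<le> (\<Sum>i\<in>{k..<l}. \<Sum>j<k. u (s j) * exp (- b * e (s i)))"
    using lm by (intro sum_mono term_ineq ord) auto
  also have "\<dots> = knot_y u s k * Dx"
    unfolding Dx_def knot_y_def by (simp add: sum_distrib_left sum_distrib_right sum.swap[of _ "{..<k}"])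
  finally have "Dy * knot_x b e s k \<le> knot_y u s k * Dx" .
  moreover have "knot_y u s l = knot_y u s k + Dy" "knot_x b e s l = knot_x b e s k + Dx"
    using kl ky_split kx_split Dy_def Dx_def by auto
  ultimately show ?thesis by (simp add: algebra_simps)
qed

lemma curve_obtain:
  assumes m: "0 < m" and t0: "0 \<le> t" and tm: "t \<le> knot_x b e s m"
  shows "\<exists>k<m. \<exists>l. 0 \<le> l \<and> l \<le> 1 \<and> t = (1 - l) * knot_x b e s k + l * knot_x b e s (Suc k)
           \<and> curve_of b e A u s t = (1 - l) * knot_y u s k + l * knot_y u s (Suc k)"
proof -
  define k where "k = (LEAST k. t \<le> knot_x b e s (Suc k))"
  have ex: "t \<le> knot_x b e s (Suc (m - 1))" using m tm by simp
  have t1: "t \<le> knot_x b e s (Suc k)" unfolding k_def by (rule LeastI[of "\<lambda>k. t \<le> knot_x b e s (Suc k)", OF ex])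
  have km: "k \<le> m - 1" unfolding k_def by (rule Least_le[of "\<lambda>k. t \<le> knot_x b e s (Suc k)", OF ex])
  have t2: "knot_x b e s k \<le> t"
  proof (cases k)
    case 0 thus ?thesis using t0 by simp
  next
    case (Suc j)
    have "\<not> t \<le> knot_x b e s (Suc j)" using not_less_Least[of j "\<lambda>k. t \<le> knot_x b e s (Suc k)"] Suc k_def by auto
    thus ?thesis using Suc by simp
  qed
  define d where "d = knot_x b e s (Suc k) - knot_x b e s k"
  have dpos: "d > 0" unfolding d_def using kx_strict[of k "Suc k"] by simp
  define l where "l = (t - knot_x b e s k) / d"
  have "0 \<le> l" unfolding l_def using t2 dpos by simp
  moreover have "l \<le> 1" unfolding l_def using t1 dpos by (simp add: d_def)
  moreover have "t = (1 - l) * knot_x b e s k + l * knot_x b e s (Suc k)"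
  proof -
    have "l * d = t - knot_x b e s k" unfolding l_def using dpos by simp
    thus ?thesis unfolding d_def by (simp add: algebra_simps)
  qed
  moreover have "curve_of b e A u s t = (1 - l) * knot_y u s k + l * knot_y u s (Suc k)"
  proof -
    have "curve_of b e A u s t = knot_y u s k + l * (knot_y u s (Suc k) - knot_y u s k)"
      unfolding curve_of_def Let_def k_def[symmetric] l_def d_def by simp
    thus ?thesis by (simp add: algebra_simps)
  qed
  ultimately show ?thesis using km m by (intro exI[of _ k]) auto
qed

lemma bo_bij: "beta_order b e A u s \<Longrightarrow> bij_betw s {0..<card A} A"
  unfolding beta_order_def by blast

lemma bo_in: "beta_order b e A u s \<Longrightarrow> j < card A \<Longrightarrow> s j \<in> A"
proof -
  assume a: "beta_order b e A u s" "j < card A"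
  from bo_bij[OF a(1)] have "s ` {0..<card A} = A" by (simp add: bij_betw_def)
  thus ?thesis using a(2) by auto
qed

lemma kx_total: "beta_order b e A u s \<Longrightarrow> knot_x b e s (card A) = partfun b e A"
  unfolding knot_x_def partfun_def lessThan_atLeast0
  by (rule sum.reindex_bij_betw[OF bo_bij])

lemma ky_total: "beta_order b e A u s \<Longrightarrow> knot_y u s (card A) = (\<Sum>a\<in>A. u a)"
  unfolding knot_y_def lessThan_atLeast0
  by (rule sum.reindex_bij_betw[OF bo_bij])

lemma bo_exists:
  assumes "finite A"
  shows "\<exists>s. beta_order b e A u s"
proof -
  define f where "f = (\<lambda>a. - (u a * exp (b * e a)))"
  obtain ys where ys: "set ys = A" "distinct ys" using finite_distinct_list[OF assms] by blast
  define xs where "xs = sort_key f ys"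
  have d: "distinct xs" unfolding xs_def using ys by simp
  have st: "set xs = A" unfolding xs_def using ys by simp
  have len: "length xs = card A" using distinct_card[OF d] st by simp
  have so: "sorted (map f xs)" unfolding xs_def by simp
  have "bij_betw ((!) xs) {0..<card A} A"
    by (rule bij_betw_nth[OF d]) (auto simp: len st)
  moreover have "\<forall>j k. j \<le> k \<and> k < card A \<longrightarrow>
        u (xs ! k) * exp (b * e (xs ! k)) \<le> u (xs ! j) * exp (b * e (xs ! j))"
  proof (intro allI impI)
    fix j k assume jk: "j \<le> k \<and> k < card A"
    have "map f xs ! j \<le> map f xs ! k" using sorted_nth_mono[OF so, of j k] jk len by simp
    thus "u (xs ! k) * exp (b * e (xs ! k)) \<le> u (xs ! j) * exp (b * e (xs ! j))"
      using jk len by (simp add: f_def)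
  qed
  ultimately show ?thesis unfolding beta_order_def by blast
qed


lemma ky_le_total:
  assumes bo: "beta_order b e A u s" and nn: "\<forall>a\<in>A. 0 \<le> u a" and k: "k \<le> card A"
  shows "knot_y u s k \<le> (\<Sum>a\<in>A. u a)"
proof -
  have "knot_y u s k \<le> knot_y u s (card A)"
    using k nn bo_in[OF bo] by (intro ky_mono) auto
  thus ?thesis using ky_total[OF bo] by simp
qed

lemma upper_bound:
  assumes bo: "beta_order b e A u s" and nn: "\<forall>a\<in>A. 0 \<le> u a"
    and M: "\<forall>a\<in>A. u a \<le> M * exp (- b * e a)"
    and m: "0 < card A" and t0: "0 \<le> t" and tm: "t \<le> partfun b e A"
  shows "curve_of b e A u s t \<le> M * t \<and> curve_of b e A u s t \<le> (\<Sum>a\<in>A. u a)"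
proof -
  obtain k l where k: "k < card A" and l: "0 \<le> l" "l \<le> 1"
    and t: "t = (1 - l) * knot_x b e s k + l * knot_x b e s (Suc k)"
    and c: "curve_of b e A u s t = (1 - l) * knot_y u s k + l * knot_y u s (Suc k)"
    using curve_obtain[OF m t0, of b e s A u] tm kx_total[OF bo] by auto
  have yM: "knot_y u s j \<le> M * knot_x b e s j" if "j \<le> card A" for j
    unfolding knot_y_def knot_x_def sum_distrib_left
    using that M bo_in[OF bo] by (intro sum_mono) auto
  have y1: "knot_y u s k \<le> M * knot_x b e s k" using yM k by simp
  have y2: "knot_y u s (Suc k) \<le> M * knot_x b e s (Suc k)" using yM k by simp
  have "curve_of b e A u s t \<le> (1 - l) * (M * knot_x b e s k) + l * (M * knot_x b e s (Suc k))"
    unfolding c using l y1 y2 by (intro add_mono mult_left_mono) auto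
  also have "\<dots> = M * t" unfolding t by (simp add: algebra_simps)
  finally have 1: "curve_of b e A u s t \<le> M * t" .
  have z1: "knot_y u s k \<le> (\<Sum>a\<in>A. u a)" using ky_le_total[OF bo nn] k by simp
  have z2: "knot_y u s (Suc k) \<le> (\<Sum>a\<in>A. u a)" using ky_le_total[OF bo nn] k by simp
  have "curve_of b e A u s t \<le> (1 - l) * (\<Sum>a\<in>A. u a) + l * (\<Sum>a\<in>A. u a)"
    unfolding c using l z1 z2 by (intro add_mono mult_left_mono) auto
  hence 2: "curve_of b e A u s t \<le> (\<Sum>a\<in>A. u a)" by (simp add: algebra_simps)
  show ?thesis using 1 2 by simp
qed

lemma chord_bound:
  assumes bo: "beta_order b e A u s" and nn: "\<forall>a\<in>A. 0 \<le> u a"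
    and K: "0 < K" "K \<le> card A" and t0: "0 \<le> t" and tm: "t \<le> partfun b e A"
  shows "min (knot_y u s K) (t * knot_y u s K / knot_x b e s K) \<le> curve_of b e A u s t"
proof -
  have m: "0 < card A" using K by simp
  obtain k l where k: "k < card A" and l: "0 \<le> l" "l \<le> 1"
    and t: "t = (1 - l) * knot_x b e s k + l * knot_x b e s (Suc k)"
    and c: "curve_of b e A u s t = (1 - l) * knot_y u s k + l * knot_y u s (Suc k)"
    using curve_obtain[OF m t0, of b e s A u] tm kx_total[OF bo] by auto
  have nnj: "\<forall>j<card A. 0 \<le> u (s j)" using nn bo_in[OF bo] by auto
  have xK: "knot_x b e s K > 0" using kx_strict[of 0 K] K by simp
  show ?thesis
  proof (cases "Suc k \<le> K")
    case True
    have h1: "knot_y u s K * knot_x b e s k \<le> knot_y u s k * knot_x b e s K"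
      using chord[OF bo] True K by simp
    have h2: "knot_y u s K * knot_x b e s (Suc k) \<le> knot_y u s (Suc k) * knot_x b e s K"
      using chord[OF bo] True K by simp
    have "t * knot_y u s K = (1 - l) * (knot_y u s K * knot_x b e s k) + l * (knot_y u s K * knot_x b e s (Suc k))"
      unfolding t by (simp add: algebra_simps)
    also have "\<dots> \<le> (1 - l) * (knot_y u s k * knot_x b e s K) + l * (knot_y u s (Suc k) * knot_x b e s K)"
      using l h1 h2 by (intro add_mono mult_left_mono) auto
    also have "\<dots> = curve_of b e A u s t * knot_x b e s K" unfolding c by (simp add: algebra_simps)
    finally have "t * knot_y u s K / knot_x b e s K \<le> curve_of b e A u s t"
      using xK by (simp add: divide_le_eq)
    thus ?thesis by simp
  next
    case False
    have a1: "knot_y u s K \<le> knot_y u s k" using False nnj k by (intro ky_mono) auto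
    have a2: "knot_y u s k \<le> knot_y u s (Suc k)" using nnj k by (intro ky_mono) auto
    have "knot_y u s K \<le> (1 - l) * knot_y u s K + l * knot_y u s K" by (simp add: algebra_simps)
    also have "\<dots> \<le> curve_of b e A u s t" unfolding c using l a1 a2
      by (intro add_mono mult_left_mono) auto
    finally show ?thesis by simp
  qed
qed



lemma prefix_pos:
  assumes bo: "beta_order b e A u s" and fin: "finite A" and nn: "\<forall>a\<in>A. 0 \<le> u a"
  defines "P \<equiv> {a\<in>A. u a \<noteq> 0}"
  shows "s ` {0..<card P} = P" "card P \<le> card A"
    "knot_y u s (card P) = (\<Sum>a\<in>A. u a)"
    "knot_x b e s (card P) = (\<Sum>a\<in>P. exp (- b * e a))"
proof -
  have PA: "P \<subseteq> A" unfolding P_def by auto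
  show cPA: "card P \<le> card A" using card_mono[OF fin PA] .
  have finP: "finite P" using fin PA finite_subset by blast
  have img: "s ` {0..<card A} = A" using bo_bij[OF bo] by (simp add: bij_betw_def)
  have inj: "inj_on s {0..<card A}" using bo_bij[OF bo] by (simp add: bij_betw_def)
  have ord: "\<And>i j. j \<le> i \<Longrightarrow> i < card A \<Longrightarrow> u (s i) * exp (b * e (s i)) \<le> u (s j) * exp (b * e (s j))"
    using bo unfolding beta_order_def by blast
  have tail: "u (s i) = 0" if "j \<le> i" "i < card A" "u (s j) = 0" for i j
  proof -
    have "u (s i) * exp (b * e (s i)) \<le> 0" using ord[OF that(1,2)] that(3) by simp
    hence "u (s i) \<le> 0" by (simp add: mult_le_0_iff)
    moreover have "0 \<le> u (s i)" using nn bo_in[OF bo that(2)] by blast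
    ultimately show ?thesis by simp
  qed
  have inP: "s j \<in> P" if j: "j < card P" for j
  proof (rule ccontr)
    assume nj: "s j \<notin> P"
    have jA: "j < card A" using j cPA by simp
    have z: "u (s j) = 0" using nj bo_in[OF bo jA] unfolding P_def by auto
    have "P \<subseteq> s ` {0..<j}"
    proof
      fix a assume aP: "a \<in> P"
      then obtain i where i: "i < card A" "a = s i" using PA img by force
      have "i < j"
      proof (rule ccontr)
        assume "\<not> i < j"
        hence "u (s i) = 0" using tail[of j i] i z by simp
        thus False using aP i unfolding P_def by simp
      qed
      thus "a \<in> s ` {0..<j}" using i by auto
    qed
    hence "card P \<le> card (s ` {0..<j})" by (intro card_mono) auto
    also have "\<dots> \<le> j" using card_image_le[of "{0..<j}" s] by simp
    finally show False using j by simp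
  qed
  have sub: "s ` {0..<card P} \<subseteq> P" using inP by auto
  have injP: "inj_on s {0..<card P}" using inj_on_subset[OF inj] cPA by auto
  have cimg: "card (s ` {0..<card P}) = card P" using card_image[OF injP] by simp
  show eq: "s ` {0..<card P} = P" using card_subset_eq[OF finP sub cimg] .
  have "knot_y u s (card P) = (\<Sum>a\<in>s ` {0..<card P}. u a)"
    unfolding knot_y_def lessThan_atLeast0 sum.reindex[OF injP] by simp
  also have "\<dots> = (\<Sum>a\<in>A. u a)" unfolding eq
    by (rule sum.mono_neutral_left[OF fin PA]) (auto simp: P_def)
  finally show "knot_y u s (card P) = (\<Sum>a\<in>A. u a)" .
  have "knot_x b e s (card P) = (\<Sum>a\<in>s ` {0..<card P}. exp (- b * e a))"
    unfolding knot_x_def lessThan_atLeast0 sum.reindex[OF injP] by simp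
  thus "knot_x b e s (card P) = (\<Sum>a\<in>P. exp (- b * e a))" unfolding eq .
qed

lemma strict_below:
  assumes bo: "beta_order b e A u s" and fin: "finite A" and nn: "\<forall>a\<in>A. 0 \<le> u a"
    and t0: "0 \<le> t" and tlt: "t < knot_x b e s (card {a\<in>A. u a \<noteq> 0})"
  shows "curve_of b e A u s t < (\<Sum>a\<in>A. u a)"
proof -
  define P where "P = {a\<in>A. u a \<noteq> 0}"
  note pp = prefix_pos[OF bo fin nn, folded P_def]
  define S where "S = (\<Sum>a\<in>A. u a)"
  have tlt': "t < knot_x b e s (card P)" using tlt P_def by simp
  have cP: "0 < card P" using tlt' t0 by (cases "card P") auto
  have m: "0 < card A" using cP pp(2) by simp
  have "knot_x b e s (card P) \<le> knot_x b e s (card A)" using pp(2) by (rule kx_mono)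
  hence tm: "t \<le> partfun b e A" using tlt' kx_total[OF bo] by simp
  obtain k l where k: "k < card A" and l: "0 \<le> l" "l \<le> 1"
    and t: "t = (1 - l) * knot_x b e s k + l * knot_x b e s (Suc k)"
    and c: "curve_of b e A u s t = (1 - l) * knot_y u s k + l * knot_y u s (Suc k)"
    using curve_obtain[OF m t0, of b e s A u] tm kx_total[OF bo] by auto
  have xk: "knot_x b e s k \<le> t"
  proof -
    have "knot_x b e s k \<le> knot_x b e s (Suc k)" by (rule kx_mono) simp
    hence "(1 - l) * knot_x b e s k + l * knot_x b e s k \<le> t" unfolding t using l
      by (intro add_mono mult_left_mono) auto
    thus ?thesis by (simp add: algebra_simps)
  qed
  have lt: "knot_y u s j < S" if j: "j < card P" for j
  proof -
    have sj: "s j \<in> P" using pp(1) j by auto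
    have upos: "0 < u (s j)" using sj nn unfolding P_def by force
    have nnj: "\<forall>i<card A. 0 \<le> u (s i)" using nn bo_in[OF bo] by auto
    have "u (s j) \<le> (\<Sum>i\<in>{j..<card P}. u (s i))"
      using j nnj pp(2) by (intro member_le_sum) auto
    moreover have "knot_y u s (card P) = knot_y u s j + (\<Sum>i\<in>{j..<card P}. u (s i))"
      using j by (intro ky_split) simp
    ultimately show ?thesis using upos pp(3) S_def by simp
  qed
  have kP: "k < card P"
  proof (rule ccontr)
    assume "\<not> k < card P"
    hence "knot_x b e s (card P) \<le> knot_x b e s k" by (intro kx_mono) simp
    thus False using xk tlt' by simp
  qed
  have yk1: "knot_y u s (Suc k) \<le> S" using ky_le_total[OF bo nn, of "Suc k"] k S_def by simp
  show ?thesis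
  proof (cases "l < 1")
    case True
    have "(1 - l) * knot_y u s k < (1 - l) * S" using True lt[OF kP] by simp
    moreover have "l * knot_y u s (Suc k) \<le> l * S" using l yk1 by (intro mult_left_mono) auto
    ultimately have "curve_of b e A u s t < (1 - l) * S + l * S" unfolding c by linarith
    thus ?thesis by (simp add: S_def algebra_simps)
  next
    case False
    hence l1: "l = 1" using l by simp
    have "Suc k < card P"
    proof (rule ccontr)
      assume "\<not> Suc k < card P"
      hence "knot_x b e s (card P) \<le> knot_x b e s (Suc k)" by (intro kx_mono) simp
      thus False using t l1 tlt' by simp
    qed
    thus ?thesis using lt c l1 S_def by simp
  qed
qed



lemma sum_SW: "(\<Sum>a\<in>SW_levels n. f a) = (\<Sum>i<n. f (i, 0) + f (i, 1))"
proof -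
  have "(\<Sum>i\<in>{0..<n}. \<Sum>b\<in>{0,1::nat}. f (i, b)) = (\<Sum>a\<in>SW_levels n. f a)"
    unfolding SW_levels_def by (subst sum.cartesian_product) simp
  hence "(\<Sum>a\<in>SW_levels n. f a) = (\<Sum>i\<in>{0..<n}. \<Sum>b\<in>{0,1::nat}. f (i, b))" by simp
  thus ?thesis by (simp add: lessThan_atLeast0)
qed

lemma finite_SW: "finite (SW_levels n)" unfolding SW_levels_def by simp

theorem mainTheorem8:
  fixes n :: nat and E :: "nat \<Rightarrow> real" and beta :: real and x :: "nat \<Rightarrow> real"
  assumes beta_pos: "beta > 0"
    and x_nonneg: "\<forall>i<n. x i \<ge> 0"
    and x_sum: "(\<Sum>i<n. x i) = 1"
  defines "Wset \<equiv> {W::real. thermo_maj beta (SW_energy E W) (SW_levels n)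
                               (batt0 x) (batt1 (gibbs beta n E))}"
  shows "Sup Wset \<in> Wset \<and> (\<forall>W\<in>Wset. W \<le> Sup Wset) \<and>
         Sup Wset = - (1 / beta) * ln (\<Sum>i\<in>{i. i < n \<and> x i \<noteq> 0}. gibbs beta n E i)"
proof -
  define I where "I = {i. i < n \<and> x i \<noteq> 0}"
  define Z where "Z = (\<Sum>j<n. exp (- beta * E j))"
  define G where "G = (\<Sum>i\<in>I. gibbs beta n E i)"
  define A where "A = SW_levels n"
  have finA: "finite A" unfolding A_def by (rule finite_SW)
  have finI: "finite I" unfolding I_def by simp
  have Ine: "I \<noteq> {}"
  proof
    assume "I = {}"
    hence "\<forall>i<n. x i = 0" unfolding I_def by auto
    thus False using x_sum by simp
  qed
  have npos: "0 < n" using Ine unfolding I_def by auto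
  have Zpos: "Z > 0" unfolding Z_def using npos by (intro sum_pos) auto
  have gib: "gibbs beta n E i = exp (- beta * E i) / Z" for i unfolding gibbs_def Z_def by simp
  have GZ: "G * Z = (\<Sum>i\<in>I. exp (- beta * E i))"
    unfolding G_def gib sum_distrib_right using Zpos by simp
  have Gpos: "G > 0" unfolding G_def gib using Ine finI Zpos by (intro sum_pos) auto
  have gsum: "(\<Sum>i<n. gibbs beta n E i) = 1" unfolding gib Z_def[symmetric] sum_divide_distrib[symmetric]
    using Zpos by (simp add: Z_def)
  define c where "c = - (1 / beta) * ln G"
  have key: "W \<in> Wset \<longleftrightarrow> W \<le> c" for W
  proof -
    define eps where "eps = SW_energy E W"
    define us where "us = batt0 x"
    define ut where "ut = batt1 (gibbs beta n E)"
    define ss where "ss = (SOME s. beta_order beta eps A us s)"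
    define st where "st = (SOME s. beta_order beta eps A ut s)"
    have bos: "beta_order beta eps A us ss" unfolding ss_def
      by (rule someI_ex[OF bo_exists[OF finA]])
    have bot: "beta_order beta eps A ut st" unfolding st_def
      by (rule someI_ex[OF bo_exists[OF finA]])
    have inA: "a \<in> A \<Longrightarrow> fst a < n" for a unfolding A_def SW_levels_def by auto
    have nns: "\<forall>a\<in>A. 0 \<le> us a" unfolding us_def batt0_def using x_nonneg inA by auto
    have nnt: "\<forall>a\<in>A. 0 \<le> ut a" unfolding ut_def batt1_def gib using Zpos by auto
    have Wmem: "W \<in> Wset \<longleftrightarrow> (\<forall>t\<in>{0..partfun beta eps A}.
        curve_of beta eps A ut st t \<le> curve_of beta eps A us ss t)"
      unfolding Wset_def thermo_maj_def thermo_curve_def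
      by (simp add: eps_def us_def ut_def A_def ss_def st_def)
    have ex: "exp (- (beta * (E i + W))) = exp (- (beta * W)) * exp (- (beta * E i))" for i
      by (simp add: mult_exp_exp algebra_simps)
    have pf: "partfun beta eps A = Z + exp (- beta * W) * Z"
      unfolding partfun_def A_def sum_SW eps_def SW_energy_def Z_def
      by (simp add: ex sum.distrib sum_distrib_left)
    define Ps where "Ps = {a\<in>A. us a \<noteq> 0}"
    define Pt where "Pt = {a\<in>A. ut a \<noteq> 0}"
    have Pseq: "Ps = (\<lambda>i. (i, 0)) ` I"
      unfolding Ps_def I_def A_def SW_levels_def us_def batt0_def by force
    have Pteq: "Pt = (\<lambda>i. (i, 1)) ` {..<n}"
      unfolding Pt_def A_def SW_levels_def ut_def batt1_def gib using Zpos by force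
    have sPs: "(\<Sum>a\<in>Ps. exp (- beta * eps a)) = G * Z"
      unfolding Pseq GZ by (subst sum.reindex) (auto simp: inj_on_def eps_def SW_energy_def)
    have sPt: "(\<Sum>a\<in>Pt. exp (- beta * eps a)) = exp (- beta * W) * Z"
      unfolding Pteq Z_def sum_distrib_left
      by (subst sum.reindex) (auto simp: inj_on_def eps_def SW_energy_def ex)
    have Ss: "(\<Sum>a\<in>A. us a) = 1" unfolding A_def sum_SW us_def batt0_def using x_sum by simp
    have St: "(\<Sum>a\<in>A. ut a) = 1" unfolding A_def sum_SW ut_def batt1_def using gsum by simp
    note pps = prefix_pos[OF bos finA nns, folded Ps_def]
    note ppt = prefix_pos[OF bot finA nnt, folded Pt_def]
    have cPs: "0 < card Ps" using Pseq Ine finI by (simp add: card_gt_0_iff)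
    have cPt: "0 < card Pt" using Pteq npos by (auto simp: card_gt_0_iff)
    have xs: "knot_x beta eps ss (card Ps) = G * Z" using pps(4) sPs by simp
    have ys: "knot_y us ss (card Ps) = 1" using pps(3) Ss by simp
    have xt: "knot_x beta eps st (card Pt) = exp (- beta * W) * Z" using ppt(4) sPt by simp
    have yt: "knot_y ut st (card Pt) = 1" using ppt(3) St by simp
    have Apos: "0 < card A" using cPs pps(2) by simp
    have equiv: "W \<le> c \<longleftrightarrow> exp (beta * W) * G \<le> 1"
    proof -
      have "exp (beta * W) * G = exp (beta * W + ln G)" using Gpos by (simp add: exp_add)
      hence "exp (beta * W) * G \<le> 1 \<longleftrightarrow> beta * W + ln G \<le> 0" by simp
      also have "\<dots> \<longleftrightarrow> W \<le> c" unfolding c_def using beta_pos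
        by (simp add: field_simps) linarith
      finally show ?thesis by simp
    qed
    have eW: "exp (beta * W) * exp (- beta * W) = 1" by (simp add: mult_exp_exp)
    show ?thesis
    proof
      assume "W \<in> Wset"
      hence maj: "\<And>t. t \<in> {0..partfun beta eps A} \<Longrightarrow>
          curve_of beta eps A ut st t \<le> curve_of beta eps A us ss t" using Wmem by blast
      show "W \<le> c"
      proof (rule ccontr)
        assume "\<not> W \<le> c"
        hence gt: "1 < exp (beta * W) * G" using equiv by simp
        define t0 where "t0 = exp (- beta * W) * Z"
        have t0pos: "0 < t0" unfolding t0_def using Zpos by simp
        have t0m: "t0 \<le> partfun beta eps A" unfolding pf t0_def using Zpos by simp
        have "min 1 (t0 * 1 / t0) \<le> curve_of beta eps A ut st t0"
          using chord_bound[OF bot nnt cPt ppt(2), of t0] t0pos t0m xt yt t0_def by simp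
        hence c1: "1 \<le> curve_of beta eps A ut st t0" using t0pos by simp
        have "t0 < G * Z"
        proof -
          have "exp (- beta * W) * 1 < exp (- beta * W) * (exp (beta * W) * G)"
            using gt by (intro mult_strict_left_mono) auto
          moreover have "exp (- beta * W) * (exp (beta * W) * G) = G"
            by (metis eW mult.assoc mult.commute mult.left_neutral)
          ultimately have "exp (- beta * W) < G" by (metis mult.right_neutral)
          thus ?thesis unfolding t0_def using Zpos by simp
        qed
        hence "curve_of beta eps A us ss t0 < 1"
          using strict_below[OF bos finA nns, of t0] t0pos xs Ss Ps_def by simp
        moreover have "curve_of beta eps A ut st t0 \<le> curve_of beta eps A us ss t0"
          using maj t0pos t0m by simp
        ultimately show False using c1 by simp
      qed
    next
      assume "W \<le> c"
      hence le1: "exp (beta * W) * G \<le> 1" using equiv by simp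
      define M where "M = exp (beta * W) / Z"
      have Mb: "\<forall>a\<in>A. ut a \<le> M * exp (- beta * eps a)"
      proof
        fix a assume "a \<in> A"
        show "ut a \<le> M * exp (- beta * eps a)"
        proof (cases "snd a = 1")
          case True
          have "M * exp (- beta * eps a) = exp (beta * W) * exp (- beta * W) * exp (- beta * E (fst a)) / Z"
            unfolding M_def eps_def SW_energy_def using True ex[of "fst a"] by simp
          thus ?thesis unfolding ut_def batt1_def gib using True eW by simp
        next
          case False thus ?thesis unfolding ut_def batt1_def M_def using Zpos by simp
        qed
      qed
      have "\<forall>t\<in>{0..partfun beta eps A}. curve_of beta eps A ut st t \<le> curve_of beta eps A us ss t"
      proof
        fix t assume t: "t \<in> {0..partfun beta eps A}"
        have ub: "curve_of beta eps A ut st t \<le> M * t" "curve_of beta eps A ut st t \<le> 1"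
          using upper_bound[OF bot nnt Mb Apos, of t] t St by auto
        have lb: "min 1 (t * 1 / (G * Z)) \<le> curve_of beta eps A us ss t"
          using chord_bound[OF bos nns cPs pps(2), of t] t xs ys by simp
        have "M * t \<le> t / (G * Z)"
        proof -
          have "M \<le> 1 / (G * Z)" unfolding M_def using le1 Zpos Gpos
            by (simp add: field_simps)
          thus ?thesis using t mult_right_mono[of M "1 / (G * Z)" t] by simp
        qed
        thus "curve_of beta eps A ut st t \<le> curve_of beta eps A us ss t"
          using ub lb by linarith
      qed
      thus "W \<in> Wset" using Wmem by simp
    qed
  qed
  have Weq: "Wset = {..c}" using key by auto
  show ?thesis unfolding Weq c_def G_def I_def by simp
qed

end
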